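(* Let $1<p\le2$ and let $X$ be a real normed space of type $p$ with type $p$ constant $T_p(X)$. Let $A\subseteq X$ be approximately convex, $D=\operatorname{diam}(A)$, and $d=\mathcal{H}(A,\operatorname{Co}(A))$. If $d\ge2$, then $$D\ge\frac{8^{1/p}}{16\,T_p(X)}\,(2^d)^{(p-1)/p}$$ (with the right-hand side interpreted as $+\infty$ if $d=+\infty$).
   Context: $X$ has type $p$ if there is a constant $T_p(X)$ such that $\bigl(\mathbb{E}\|\sum_{i=1}^n\varepsilon_ix_i\|^p\bigr)^{1/p}\le T_p(X)\bigl(\sum_{i=1}^n\|x_i\|^p\bigr)^{1/p}$ for all $n$ and $x_1,\dots,x_n\in X$, where $(\varepsilon_i)$ are independent random signs with $P(\varepsilon_i=1)=P(\varepsilon_i=-1)=1/2$. A set $A$ is approximately convex if $d(tx+(1-t)y,A)\le1$ for all $x,y\in A$, $t\in[0,1]$, where $d(x,A)=\inf_{a\in A}\|x-a\|$. $\mathcal{H}$ is the Hausdorff distance, $\operatorname{Co}$ the convex hull, $\operatorname{diam}(A)=\sup\{\|x-y\|:x,y\in A\}$. *)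

theory Defs
  imports "HOL-Analysis.Analysis"
begin

text \<open>Rademacher average: the expectation over independent random signs
  eps_0,...,eps_(n-1) is the uniform average over all 2^n sign vectors.\<close>
definition sign_vectors :: "nat \<Rightarrow> (nat \<Rightarrow> real) set" where
  "sign_vectors n = PiE {..<n} (\<lambda>_. {-1, 1})"

definition is_type_const :: "real \<Rightarrow> real \<Rightarrow> 'a::real_normed_vector itself \<Rightarrow> bool" where
  "is_type_const p T _ \<longleftrightarrow>
     (\<forall>(n::nat) (x::nat \<Rightarrow> 'a).
        ((1 / 2 ^ n) * (\<Sum>\<epsilon>\<in>sign_vectors n. norm (\<Sum>i<n. \<epsilon> i *\<^sub>R x i) powr p)) powr (1 / p)
          \<le> T * (\<Sum>i<n. norm (x i) powr p) powr (1 / p))"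

definition approx_convex :: "'a::real_normed_vector set \<Rightarrow> bool" where
  "approx_convex A \<longleftrightarrow>
     (\<forall>x\<in>A. \<forall>y\<in>A. \<forall>t\<in>{0..1::real}. infdist (t *\<^sub>R x + (1 - t) *\<^sub>R y) A \<le> 1)"

text \<open>Diameter and Hausdorff distance with values in the extended reals
  (they may be +infinity for unbounded sets).\<close>
definition ediam :: "'a::metric_space set \<Rightarrow> ereal" where
  "ediam A = (SUP x\<in>A. SUP y\<in>A. ereal (dist x y))"

definition ehausdist :: "'a::metric_space set \<Rightarrow> 'a set \<Rightarrow> ereal" where
  "ehausdist A B = max (SUP a\<in>A. ereal (infdist a B)) (SUP b\<in>B. ereal (infdist b A))"

end

theory Submission
  imports Defs
begin

definition avg :: "nat \<Rightarrow> (nat \<Rightarrow> 'a::real_normed_vector) \<Rightarrow> 'a" where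
  "avg n x = (1 / 2 ^ n) *\<^sub>R (\<Sum>i<2^n. x i)"

lemma pair_sum: "(\<Sum>i<2*m. f i) = (\<Sum>j<m. f (2*j) + f (2*j+1 :: nat)) " for f :: "nat \<Rightarrow> 'b::comm_monoid_add"
  by (induction m) (simp_all add: add.assoc)

lemma avg_Suc: "avg (Suc n) x = (1/2) *\<^sub>R (avg n (\<lambda>j. x (2*j)) + avg n (\<lambda>j. x (2*j+1)))"
proof -
  have "(\<Sum>i<2^Suc n. x i) = (\<Sum>j<2^n. x (2*j) + x (2*j+1))"
    using pair_sum[where m="2^n" and f=x] by simp
  also have "\<dots> = (\<Sum>j<2^n. x (2*j)) + (\<Sum>j<2^n. x (2*j+1))" by (simp add: sum.distrib)
  finally show ?thesis unfolding avg_def by (simp add: scaleR_add_right)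
qed

lemma avg_pad: "avg (n + j) (\<lambda>i. x (i div 2^j)) = avg n x"
proof (induction j)
  case 0 then show ?case by simp
next
  case (Suc j)
  have e: "\<And>i::nat. (2*i) div (2*2^j) = i div 2^j" "\<And>i::nat. Suc (2*i) div (2*2^j) = i div 2^j"
    by (simp_all add: div_mult2_eq)
  show ?case using Suc by (simp add: avg_Suc e scaleR_add_right[symmetric])
qed

lemma infdist_approx:
  assumes "A \<noteq> {}" "infdist u A < r" obtains a where "a \<in> A" "dist u a < r"
  using assms cINF_less_iff[of A "dist u" r] by (auto simp: infdist_notempty)

lemma mid_infdist:
  assumes ac: "approx_convex A" and ne: "A \<noteq> {}"
    and u: "infdist u A \<le> r" and v: "infdist v A \<le> r"
  shows "infdist ((1/2) *\<^sub>R (u + v)) A \<le> r + 1"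
proof (rule field_le_epsilon)
  fix e :: real assume e: "0 < e"
  obtain a where a: "a \<in> A" "dist u a < r + e" using infdist_approx[OF ne, of u "r+e"] u e by auto
  obtain b where b: "b \<in> A" "dist v b < r + e" using infdist_approx[OF ne, of v "r+e"] v e by auto
  let ?m = "(1/2) *\<^sub>R a + (1 - 1/2) *\<^sub>R b"
  have "\<forall>t\<in>{0..1::real}. infdist (t *\<^sub>R a + (1-t) *\<^sub>R b) A \<le> 1"
    using ac a b unfolding approx_convex_def by blast
  then have m: "infdist ?m A \<le> 1" by (rule bspec) simp
  have "dist ((1/2) *\<^sub>R (u + v)) ?m = norm ((1/2) *\<^sub>R ((u - a) + (v - b)))"
    by (simp add: dist_norm algebra_simps)
  also have "\<dots> \<le> (1/2) * (norm (u - a) + norm (v - b))"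
    by (simp add: norm_triangle_ineq)
  also have "\<dots> < r + e" using a b by (simp add: dist_norm)
  finally have "dist ((1/2) *\<^sub>R (u + v)) ?m < r + e" .
  with m infdist_triangle[of "(1/2) *\<^sub>R (u + v)" A ?m]
  show "infdist ((1/2) *\<^sub>R (u + v)) A \<le> r + 1 + e" by linarith
qed

lemma dyadic_base:
  assumes ac: "approx_convex A" and ne: "A \<noteq> {}"
  shows "(\<forall>i<2^k. x i \<in> A) \<Longrightarrow> infdist (avg k x) A \<le> real k"
proof (induction k arbitrary: x)
  case 0 then show ?case by (simp add: avg_def)
next
  case (Suc k)
  have h1: "infdist (avg k (\<lambda>j. x (2*j))) A \<le> real k"
    using Suc.prems by (intro Suc.IH) auto
  have h2: "infdist (avg k (\<lambda>j. x (2*j+1))) A \<le> real k"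
    using Suc.prems by (intro Suc.IH) auto
  show ?case using mid_infdist[OF ac ne h1 h2] by (simp add: avg_Suc)
qed

lemma sign_vectors_finite: "finite (sign_vectors n)"
  unfolding sign_vectors_def by (simp add: finite_PiE)

lemma card_sign_vectors: "card (sign_vectors n) = 2^n"
  unfolding sign_vectors_def by (simp add: card_PiE numeral_2_eq_2)

lemma sign_vectors_ne: "sign_vectors n \<noteq> {}"
  using card_sign_vectors[of n] by auto

lemma sign_vectors_val: "\<epsilon> \<in> sign_vectors n \<Longrightarrow> i < n \<Longrightarrow> \<epsilon> i = 1 \<or> \<epsilon> i = -1"
  unfolding sign_vectors_def by (auto simp: PiE_iff)

lemma exists_sign:
  fixes z :: "nat \<Rightarrow> 'a::real_normed_vector"
  assumes tc: "is_type_const p T TYPE('a)" and p: "p > 0" and T: "T \<ge> 0"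
  obtains \<epsilon> where "\<epsilon> \<in> sign_vectors n"
    "norm (\<Sum>i<n. \<epsilon> i *\<^sub>R z i) \<le> T * (\<Sum>i<n. norm (z i) powr p) powr (1/p)"
proof (rule ccontr)
  assume nex: "\<not> thesis"
  let ?c = "T * (\<Sum>i<n. norm (z i) powr p) powr (1/p)"
  let ?S = "sign_vectors n"
  have c0: "?c \<ge> 0" using T by simp
  have lt: "\<forall>\<epsilon>\<in>?S. ?c < norm (\<Sum>i<n. \<epsilon> i *\<^sub>R z i)"
    using nex that by force
  have "(\<Sum>\<epsilon>\<in>?S. ?c powr p) < (\<Sum>\<epsilon>\<in>?S. norm (\<Sum>i<n. \<epsilon> i *\<^sub>R z i) powr p)"
    using lt c0 p by (intro sum_strict_mono sign_vectors_finite sign_vectors_ne powr_less_mono2) auto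
  then have "2^n * ?c powr p < (\<Sum>\<epsilon>\<in>?S. norm (\<Sum>i<n. \<epsilon> i *\<^sub>R z i) powr p)"
    by (simp add: card_sign_vectors)
  then have "?c powr p < (1 / 2 ^ n) * (\<Sum>\<epsilon>\<in>?S. norm (\<Sum>i<n. \<epsilon> i *\<^sub>R z i) powr p)"
    by (simp add: field_simps)
  then have "(?c powr p) powr (1/p) < ((1 / 2 ^ n) * (\<Sum>\<epsilon>\<in>?S. norm (\<Sum>i<n. \<epsilon> i *\<^sub>R z i) powr p)) powr (1/p)"
    using p c0 by (intro powr_less_mono2) auto
  moreover have "(?c powr p) powr (1/p) = ?c" using p c0 by (simp add: powr_powr)
  moreover have "((1 / 2 ^ n) * (\<Sum>\<epsilon>\<in>?S. norm (\<Sum>i<n. \<epsilon> i *\<^sub>R z i) powr p)) powr (1/p) \<le> ?c"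
    using tc unfolding is_type_const_def sign_vectors_def by blast
  ultimately show False by linarith
qed

lemma err_bound:
  fixes z :: "nat \<Rightarrow> 'a::real_normed_vector" and s :: 'a
  assumes p: "1 < p" and T: "T \<ge> 0" and D: "D \<ge> 0"
    and nz: "\<And>j. j < 2^m \<Longrightarrow> norm (z j) \<le> D"
    and s: "norm s \<le> T * (\<Sum>j<2^m. norm (z j) powr p) powr (1/p)"
  shows "norm s / 2^Suc m \<le> (T*D/2) * (2 powr (1/p - 1))^m"
proof -
  have "(\<Sum>j<(2::nat)^m. norm (z j) powr p) \<le> (\<Sum>j<(2::nat)^m. D powr p)"
    using nz p by (intro sum_mono powr_mono2) auto
  also have "\<dots> = 2^m * D powr p" by simp
  finally have "(\<Sum>j<2^m. norm (z j) powr p) powr (1/p) \<le> (2^m * D powr p) powr (1/p)"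
    using p by (intro powr_mono2 sum_nonneg) auto
  also have "\<dots> = (2^m) powr (1/p) * D"
    using p D by (simp add: powr_mult powr_powr)
  also have "(2^m :: real) powr (1/p) = 2 powr (real m / p)"
    by (simp add: powr_realpow[symmetric] powr_powr)
  finally have "norm s \<le> T * (2 powr (real m / p) * D)"
    using s T by (meson mult_left_mono order_trans)
  then have "norm s / 2^Suc m \<le> T * (2 powr (real m / p) * D) / 2^Suc m"
    by (simp add: divide_right_mono)
  also have "\<dots> = (T*D/2) * (2 powr (real m / p) / 2 powr real m)"
    by (simp add: powr_realpow)
  also have "2 powr (real m / p) / 2 powr real m = (2 powr (1/p - 1))^m"
    by (simp add: powr_power powr_diff[symmetric] algebra_simps)
  finally show ?thesis .
qed

lemma halving:
  fixes A :: "'a::real_normed_vector set"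
  assumes tc: "is_type_const p T TYPE('a)" and p: "1 < p" and T: "T \<ge> 0"
    and ac: "approx_convex A" and ne: "A \<noteq> {}"
    and diam: "\<forall>x\<in>A. \<forall>y\<in>A. dist x y \<le> D"
  shows "(\<forall>i<2^(k+n). x i \<in> A) \<Longrightarrow>
     infdist (avg (k+n) x) A \<le> real k + (T*D/2) * (\<Sum>j<n. (2 powr (1/p - 1))^(k+j))"
proof (induction n arbitrary: x)
  case 0 then show ?case using dyadic_base[OF ac ne] by simp
next
  case (Suc n)
  define m where "m = k + n"
  have xA: "\<forall>i<2^Suc m. x i \<in> A" using Suc.prems by (simp add: m_def)
  have D: "D \<ge> 0" using ne diam by (metis all_not_in_conv zero_le_dist order_trans)
  define z where "z j = x (2*j) - x (2*j+1)" for j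
  obtain \<epsilon> where eps: "\<epsilon> \<in> sign_vectors (2^m)"
    "norm (\<Sum>j<2^m. \<epsilon> j *\<^sub>R z j) \<le> T * (\<Sum>j<2^m. norm (z j) powr p) powr (1/p)"
    using exists_sign[OF tc _ T, of "2^m" z] p by auto
  define y where "y j = (if \<epsilon> j = 1 then x (2*j) else x (2*j+1))" for j
  have yA: "\<forall>i<2^(k+n). y i \<in> A"
  proof (intro allI impI)
    fix i :: nat assume "i < 2^(k+n)"
    then have "2*i < 2^Suc m" "2*i+1 < 2^Suc m" by (auto simp: m_def)
    then show "y i \<in> A" using xA by (simp add: y_def)
  qed
  have IH: "infdist (avg m y) A \<le> real k + (T*D/2) * (\<Sum>j<n. (2 powr (1/p - 1))^(k+j))"
    using Suc.IH[OF yA] by (simp add: m_def)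
  have yj: "2 *\<^sub>R y j = (x (2*j) + x (2*j+1)) + \<epsilon> j *\<^sub>R z j" if "j < 2^m" for j
    using sign_vectors_val[OF eps(1) that]
    by (auto simp: y_def z_def algebra_simps scaleR_2)
  have "2 *\<^sub>R (\<Sum>j<2^m. y j) = (\<Sum>j<2^m. (x (2*j) + x (2*j+1)) + \<epsilon> j *\<^sub>R z j)"
    by (simp add: scaleR_sum_right yj)
  also have "\<dots> = (\<Sum>i<2^Suc m. x i) + (\<Sum>j<2^m. \<epsilon> j *\<^sub>R z j)"
    using pair_sum[where m="2^m" and f=x] by (simp add: sum.distrib)
  finally have sy: "2 *\<^sub>R (\<Sum>j<2^m. y j) = (\<Sum>i<2^Suc m. x i) + (\<Sum>j<2^m. \<epsilon> j *\<^sub>R z j)" .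
  have "avg m y = (1/2^Suc m) *\<^sub>R (2 *\<^sub>R (\<Sum>j<2^m. y j))"
    by (simp add: avg_def)
  also have "\<dots> = avg (Suc m) x + (1/2^Suc m) *\<^sub>R (\<Sum>j<2^m. \<epsilon> j *\<^sub>R z j)"
    unfolding sy avg_def by (simp add: scaleR_add_right)
  finally have dd: "dist (avg (Suc m) x) (avg m y) = norm (\<Sum>j<2^m. \<epsilon> j *\<^sub>R z j) / 2^Suc m"
    by (simp add: dist_norm)
  have nz: "norm (z j) \<le> D" if "j < 2^m" for j
  proof -
    have "2*j < 2^Suc m" "2*j+1 < 2^Suc m" using that by auto
    then show ?thesis using xA diam by (simp add: z_def dist_norm)
  qed
  have "dist (avg (Suc m) x) (avg m y) \<le> (T*D/2) * (2 powr (1/p - 1))^m"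
    unfolding dd by (rule err_bound[OF p T D nz eps(2)])
  then have "infdist (avg (Suc m) x) A \<le> real k + (T*D/2) * (\<Sum>j<n. (2 powr (1/p - 1))^(k+j)) + (T*D/2) * (2 powr (1/p - 1))^m"
    using IH infdist_triangle[of "avg (Suc m) x" A "avg m y"] by linarith
  then show ?case by (simp add: m_def distrib_left)
qed

definition dyad :: "'a::real_normed_vector set \<Rightarrow> 'a set" where
  "dyad A = {avg n x | n x. \<forall>i<2^n. x i \<in> A}"

lemma pad_in:
  fixes x :: "nat \<Rightarrow> 'b"
  shows "\<forall>i<2^n. x i \<in> A \<Longrightarrow> \<forall>i<2^(n+j). x (i div 2^j) \<in> A"
  by (simp add: less_mult_imp_div_less power_add)

lemma dyad_mid:
  assumes "u \<in> dyad A" "v \<in> dyad A" shows "(1/2) *\<^sub>R (u + v) \<in> dyad A"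
proof -
  obtain n x where u: "u = avg n x" "\<forall>i<2^n. x i \<in> A" using assms(1) by (auto simp: dyad_def)
  obtain n' x' where v: "v = avg n' x'" "\<forall>i<2^n'. x' i \<in> A" using assms(2) by (auto simp: dyad_def)
  define X where "X i = x (i div 2^n')" for i
  define X' where "X' i = x' (i div 2^n)" for i
  have uX: "u = avg (n+n') X" unfolding X_def using avg_pad[of n n' x] u by simp
  have vX: "v = avg (n+n') X'" unfolding X'_def using avg_pad[of n' n x'] v by (simp add: add.commute)
  have XA: "\<forall>i<2^(n+n'). X i \<in> A" using pad_in[OF u(2), of n'] by (simp add: X_def)
  have XA': "\<forall>i<2^(n+n'). X' i \<in> A" using pad_in[OF v(2), of n] by (simp add: X'_def add.commute)
  define w where "w i = (if even i then X (i div 2) else X' (i div 2))" for i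
  have "avg (Suc (n+n')) w = (1/2) *\<^sub>R (u + v)"
    by (simp add: avg_Suc w_def uX vX)
  moreover have "\<forall>i<2^Suc (n+n'). w i \<in> A"
    using XA XA' by (auto simp: w_def less_mult_imp_div_less)
  ultimately have "\<exists>n x. (1/2) *\<^sub>R (u + v) = avg n x \<and> (\<forall>i<2^n. x i \<in> A)"
    by metis
  then show ?thesis unfolding dyad_def by simp
qed

lemma closure_mid:
  fixes S :: "'a::real_normed_vector set"
  assumes mid: "\<And>u v. u \<in> S \<Longrightarrow> v \<in> S \<Longrightarrow> (1/2) *\<^sub>R (u + v) \<in> S"
    and x: "x \<in> closure S" and y: "y \<in> closure S"
  shows "(1/2) *\<^sub>R (x + y) \<in> closure S"
  unfolding closure_approachable
proof (intro allI impI)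
  fix e :: real assume e: "e > 0"
  obtain u where u: "u \<in> S" "dist u x < e" using x e closure_approachable by metis
  obtain v where v: "v \<in> S" "dist v y < e" using y e closure_approachable by metis
  have "dist ((1/2) *\<^sub>R (u + v)) ((1/2) *\<^sub>R (x + y)) = norm ((1/2) *\<^sub>R ((u - x) + (v - y)))"
    by (simp add: dist_norm algebra_simps)
  also have "\<dots> \<le> (1/2) * (norm (u - x) + norm (v - y))" by (simp add: norm_triangle_ineq)
  also have "\<dots> < e" using u v by (simp add: dist_norm)
  finally show "\<exists>z\<in>S. dist z ((1/2) *\<^sub>R (x + y)) < e" using mid[OF u(1) v(1)] by blast
qed

lemma comb1: "(1/2) *\<^sub>R ((a *\<^sub>R x + (1 - a) *\<^sub>R y) + (b *\<^sub>R x + (1 - b) *\<^sub>R y)) = ((a + b) / 2) *\<^sub>R x + (1 - (a + b) / 2) *\<^sub>R (y::'a::real_vector)"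
proof -
  have "(1/2) *\<^sub>R ((a *\<^sub>R x + (1 - a) *\<^sub>R y) + (b *\<^sub>R x + (1 - b) *\<^sub>R y))
     = ((1/2) * a + (1/2) * b) *\<^sub>R x + ((1/2) * (1 - a) + (1/2) * (1 - b)) *\<^sub>R y"
    unfolding scaleR_add_right scaleR_add_left scaleR_scaleR by (simp only: ac_simps)
  also have "(1/2) * a + (1/2) * b = (a + b) / 2" by simp
  also have "(1/2) * (1 - a) + (1/2) * (1 - b) = 1 - (a + b) / 2" by (simp add: field_simps)
  finally show ?thesis .
qed

lemma midconvex_closed_convex:
  fixes C :: "'a::real_normed_vector set"
  assumes cl: "closed C" and mid: "\<And>u v. u \<in> C \<Longrightarrow> v \<in> C \<Longrightarrow> (1/2) *\<^sub>R (u + v) \<in> C"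
  shows "convex C"
proof -
  have dy: "\<forall>m. m \<le> 2^n \<longrightarrow> (real m / 2^n) *\<^sub>R x + (1 - real m / 2^n) *\<^sub>R y \<in> C"
    if x: "x \<in> C" and y: "y \<in> C" for x y n
  proof (induction n)
    case 0
    show ?case
    proof (intro allI impI)
      fix m :: nat assume "m \<le> 2^0"
      then have "m = 0 \<or> m = 1" by auto
      then show "(real m / 2^0) *\<^sub>R x + (1 - real m / 2^0) *\<^sub>R y \<in> C" using x y by auto
    qed
  next
    case (Suc n)
    let ?P = "\<lambda>a::real. a *\<^sub>R x + (1 - a) *\<^sub>R y"
    have comb: "(1/2) *\<^sub>R (?P a + ?P b) = ?P ((a + b) / 2)" for a b
      by (rule comb1)
    show ?case
    proof (intro allI impI)
      fix m :: nat assume m: "m \<le> 2^Suc n"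
      show "?P (real m / 2^Suc n) \<in> C"
      proof (cases "even m")
        case True
        then obtain m' where m': "m = 2*m'" by auto
        then have "m' \<le> 2^n" using m by auto
        then have "?P (real m' / 2^n) \<in> C" using Suc by blast
        then show ?thesis using m' by simp
      next
        case False
        then obtain m' where m': "m = 2*m'+1" using oddE by blast
        then have "m' + 1 \<le> 2^n" using m by auto
        then have "?P (real m' / 2^n) \<in> C" "?P (real (m'+1) / 2^n) \<in> C" using Suc by auto
        then have "(1/2) *\<^sub>R (?P (real m' / 2^n) + ?P (real (m'+1) / 2^n)) \<in> C" by (rule mid)
        also have "(1/2) *\<^sub>R (?P (real m' / 2^n) + ?P (real (m'+1) / 2^n)) = ?P (real m / 2^Suc n)"
          unfolding comb m' by (simp add: field_simps)
        finally show ?thesis .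
      qed
    qed
  qed
  show ?thesis
  proof (rule convexI)
    fix x y :: 'a and a b :: real
    assume x: "x \<in> C" and y: "y \<in> C" and a: "0 \<le> a" and b: "0 \<le> b" and ab: "a + b = 1"
    have "a *\<^sub>R x + b *\<^sub>R y \<in> closure C"
      unfolding closure_approachable
    proof (intro allI impI)
      fix e :: real assume e: "e > 0"
      obtain n where n: "(norm (x - y) + 1) / e < 2^n" using real_arch_pow[of 2] by auto
      define m where "m = nat \<lfloor>a * 2^n\<rfloor>"
      have a1: "a \<le> 1" using ab b by linarith
      have mr: "real m = of_int \<lfloor>a * 2^n\<rfloor>" unfolding m_def using a by simp
      have mle: "m \<le> 2^n"
      proof -
        have "real m \<le> a * 2^n" unfolding mr by (rule of_int_floor_le)
        also have "\<dots> \<le> 2^n" using a1 by simp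
        finally have "real m \<le> real (2^n)" by simp
        then show ?thesis by (simp only: of_nat_le_iff)
      qed
      have d1: "\<bar>a - real m / 2^n\<bar> \<le> 1 / 2^n"
      proof -
        have "of_int \<lfloor>a * 2^n\<rfloor> \<le> a * 2^n" "a * 2^n < of_int \<lfloor>a * 2^n\<rfloor> + 1" by linarith+
        then have g: "0 \<le> a * 2^n - real m" "a * 2^n - real m \<le> 1" unfolding mr by linarith+
        have N: "(0::real) < 2^n" by simp
        have eq: "a - real m / 2^n = (a * 2^n - real m) / 2^n" using N by (simp add: field_simps)
        have "0 \<le> (a * 2^n - real m) / 2^n" using g N by simp
        moreover have "(a * 2^n - real m) / 2^n \<le> 1 / 2^n" using g N by (intro divide_right_mono) auto
        ultimately show ?thesis unfolding eq by simp
      qed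
      have "dist ((real m / 2^n) *\<^sub>R x + (1 - real m / 2^n) *\<^sub>R y) (a *\<^sub>R x + b *\<^sub>R y)
          = norm ((real m / 2^n - a) *\<^sub>R (x - y))"
      proof -
        have bb: "b = 1 - a" using ab by simp
        define s where "s = real m / 2^n"
        have "(s *\<^sub>R x + (1 - s) *\<^sub>R y) - (a *\<^sub>R x + (1 - a) *\<^sub>R y) = (s - a) *\<^sub>R (x - y)"
          by (simp add: algebra_simps)
        then show ?thesis unfolding bb s_def[symmetric] by (simp add: dist_norm)
      qed
      also have "\<dots> = \<bar>a - real m / 2^n\<bar> * norm (x - y)" by (simp add: abs_minus_commute)
      also have "\<dots> \<le> (1 / 2^n) * norm (x - y)" using d1 by (intro mult_right_mono) auto
      also have "\<dots> < e"
      proof -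
        have "norm (x - y) + 1 < e * 2^n" using n e by (simp add: field_simps)
        then show ?thesis by (simp add: field_simps)
      qed
      finally show "\<exists>z\<in>C. dist z (a *\<^sub>R x + b *\<^sub>R y) < e"
        using dy[OF x y] mle by blast
    qed
    then show "a *\<^sub>R x + b *\<^sub>R y \<in> C" using cl by simp
  qed
qed

lemma hull_in_closure_dyad:
  fixes A :: "'a::real_normed_vector set"
  shows "convex hull A \<subseteq> closure (dyad A)"
proof (rule hull_minimal)
  show "A \<subseteq> closure (dyad A)"
  proof
    fix a assume "a \<in> A"
    then have "avg 0 (\<lambda>_. a) \<in> dyad A" unfolding dyad_def by blast
    then show "a \<in> closure (dyad A)" by (auto simp: avg_def intro: closure_subset[THEN subsetD])
  qed
  show "convex (closure (dyad A))"
    by (rule midconvex_closed_convex) (auto intro: closure_mid dyad_mid)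
qed

lemma hull_bound:
  fixes A :: "'a::real_normed_vector set"
  assumes tc: "is_type_const p T TYPE('a)" and p: "1 < p" and T: "T \<ge> 0"
    and ac: "approx_convex A" and ne: "A \<noteq> {}"
    and diam: "\<forall>x\<in>A. \<forall>y\<in>A. dist x y \<le> D"
    and b: "b \<in> convex hull A"
  shows "infdist b A \<le> real k + (T*D/2) * ((2 powr (1/p - 1))^k / (1 - 2 powr (1/p - 1)))"
proof (rule field_le_epsilon)
  fix e :: real assume e: "e > 0"
  let ?r = "2 powr (1/p - 1) :: real"
  have r0: "0 < ?r" by simp
  have r1: "?r < 1" using p by (simp add: powr_less_one)
  have D: "D \<ge> 0" using ne diam by (metis all_not_in_conv zero_le_dist order_trans)
  have "b \<in> closure (dyad A)" using hull_in_closure_dyad b by blast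
  then obtain u where u: "u \<in> dyad A" "dist u b < e" using e closure_approachable by metis
  then obtain n x where ux: "u = avg n x" "\<forall>i<2^n. x i \<in> A" by (auto simp: dyad_def)
  have u2: "u = avg (k+n) (\<lambda>i. x (i div 2^k))" using avg_pad[of n k x] ux by (simp add: add.commute)
  have "\<forall>i<2^(k+n). x (i div 2^k) \<in> A" using pad_in[OF ux(2), of k] by (simp add: add.commute)
  from halving[OF tc p T ac ne diam this]
  have h: "infdist u A \<le> real k + (T*D/2) * (\<Sum>j<n. ?r^(k+j))" using u2 by simp
  have "(\<Sum>j<n. ?r^(k+j)) = ?r^k * (\<Sum>j<n. ?r^j)" by (simp add: power_add sum_distrib_left)
  also have "(\<Sum>j<n. ?r^j) = (1 - ?r^n) / (1 - ?r)" by (metis (no_types) sum_gp_strict less_irrefl r1)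
  also have "\<dots> \<le> 1 / (1 - ?r)" using r0 r1 by (simp add: divide_right_mono)
  finally have "(\<Sum>j<n. ?r^(k+j)) \<le> ?r^k * (1 / (1 - ?r))" using r0 by (simp add: mult_left_mono)
  then have hm: "(T*D/2) * (\<Sum>j<n. ?r^(k+j)) \<le> (T*D/2) * (?r^k / (1 - ?r))"
    using T D by (intro mult_left_mono) auto
  have tri: "infdist b A \<le> infdist u A + dist u b"
    using infdist_triangle[of b A u] by (simp add: dist_commute)
  show "infdist b A \<le> real k + (T*D/2) * (?r^k / (1 - ?r)) + e"
    using h u(2) tri hm by linarith
qed

lemma T_ge1:
  fixes v :: "'a::real_normed_vector"
  assumes tc: "is_type_const p T TYPE('a)" and p: "p > 0" and v: "v \<noteq> 0"
  shows "T \<ge> 1"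
proof -
  note X = tc[unfolded is_type_const_def, rule_format, where n=1 and x="\<lambda>_. v"]
  have S: "(\<Sum>\<epsilon>\<in>sign_vectors 1. norm (\<Sum>i<1. \<epsilon> i *\<^sub>R v) powr p)
      = 2 * norm v powr p"
  proof -
    have "(\<Sum>\<epsilon>\<in>sign_vectors 1. norm (\<Sum>i<1. \<epsilon> i *\<^sub>R v) powr p)
      = (\<Sum>\<epsilon>\<in>sign_vectors 1. norm v powr p)"
    proof (rule sum.cong)
      fix \<epsilon> assume "\<epsilon> \<in> sign_vectors 1"
      then have "\<epsilon> 0 = 1 \<or> \<epsilon> 0 = -1" using sign_vectors_val by blast
      then show "norm (\<Sum>i<1. \<epsilon> i *\<^sub>R v) powr p = norm v powr p" by auto
    qed simp
    then show ?thesis by (simp add: card_sign_vectors)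
  qed
  from X have "((1/2^1) * (2 * norm v powr p)) powr (1/p) \<le> T * (norm v powr p) powr (1/p)"
    unfolding S by simp
  then have "norm v \<le> T * norm v" using p by (simp add: powr_powr)
  then show ?thesis using v by simp
qed

lemma r_bound:
  fixes q :: real
  assumes q0: "0 < q" and q1: "q \<le> 1/2"
  shows "q / (1 - 2 powr (-q)) \<le> 2"
proof -
  define l where "l = ln (2::real)"
  have l: "2/3 \<le> l" unfolding l_def by (rule ln2_ge_two_thirds)
  have e: "2 powr (-q) = 1 / exp (q * l)" by (simp add: powr_def l_def exp_minus field_simps)
  have "1 + q * l \<le> exp (q * l)" by (rule exp_ge_add_one_self)
  have "0 < q * l" using q0 l by simp
  then have pl: "0 < 1 + q * l" by linarith
  have d: "1 / exp (q * l) \<le> 1 / (1 + q * l)" using \<open>1 + q * l \<le> exp (q * l)\<close> pl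
    by (intro divide_left_mono) auto
  have qq: "q * l / (1 + q * l) = 1 - 1 / (1 + q * l)" using pl by (simp add: field_simps)
  have r: "1 - 2 powr (-q) \<ge> q * l / (1 + q * l)" unfolding e qq using d by linarith
  have pos: "q * l / (1 + q * l) > 0" using \<open>0 < q * l\<close> pl by (rule divide_pos_pos)
  have "q / (1 - 2 powr (-q)) \<le> q / (q * l / (1 + q * l))"
    by (rule frac_le) (use r pos q0 in auto)
  also have "\<dots> = (1 + q * l) / l" using q0 l by (simp add: field_simps)
  also have "\<dots> \<le> 2"
  proof -
    have "q * l \<le> (1/2) * l" using q1 l by (intro mult_right_mono) auto
    then have "1 + q * l \<le> 2 * l" using l by linarith
    then show ?thesis using l by (simp add: field_simps)
  qed
  finally show ?thesis .
qed

lemma haus_le: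
  fixes A :: "'a::real_normed_vector set"
  assumes "\<And>b. b \<in> convex hull A \<Longrightarrow> infdist b A \<le> M" and "M \<ge> 0"
  shows "ehausdist A (convex hull A) \<le> ereal M"
  unfolding ehausdist_def
proof (rule max.boundedI)
  show "(SUP a\<in>A. ereal (infdist a (convex hull A))) \<le> ereal M"
  proof (rule SUP_least)
    fix a assume "a \<in> A"
    then have "a \<in> convex hull A" by (rule hull_inc)
    then show "ereal (infdist a (convex hull A)) \<le> ereal M" using assms(2) by simp
  qed
  show "(SUP b\<in>convex hull A. ereal (infdist b A)) \<le> ereal M"
    using assms(1) by (intro SUP_least) simp
qed

theorem theorem6p1:
  fixes A :: "'a::real_normed_vector set" and p T :: real
  assumes "1 < p" and "p \<le> 2"
    and "is_type_const p T TYPE('a)"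
    and "approx_convex A"
    and "ehausdist A (convex hull A) \<ge> 2"
  shows "(ehausdist A (convex hull A) = \<infinity> \<longrightarrow> ediam A = \<infinity>) \<and>
         (\<forall>d::real. ehausdist A (convex hull A) = ereal d \<longrightarrow>
            ediam A \<ge> ereal (8 powr (1 / p) / (16 * T) * (2 powr d) powr ((p - 1) / p)))"
proof -
  note p1 = assms(1) and p2 = assms(2) and tc = assms(3) and ac = assms(4) and H2 = assms(5)
  have ne: "A \<noteq> {}"
  proof
    assume "A = {}"
    then have "ehausdist A (convex hull A) = -\<infinity>" by (simp add: ehausdist_def bot_ereal_def)
    then show False using H2 by simp
  qed
  show ?thesis
  proof (cases "ediam A = \<infinity>")
    case True then show ?thesis by simp
  next
    case False
    have dle: "ereal (dist x y) \<le> ediam A" if "x \<in> A" "y \<in> A" for x y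
      unfolding ediam_def by (rule SUP_upper2[OF that(1)], rule SUP_upper[OF that(2)])
    obtain a0 where a0: "a0 \<in> A" using ne by blast
    obtain D where ED: "ediam A = ereal D"
    proof (cases "ediam A")
      case (real r) then show ?thesis using that by simp
    next
      case PInf then show ?thesis using False by simp
    next
      case MInf then show ?thesis using dle[OF a0 a0] by simp
    qed
    have diam: "\<forall>x\<in>A. \<forall>y\<in>A. dist x y \<le> D" using dle ED by simp
    have triv: "infdist b A \<le> D" if b: "b \<in> convex hull A" for b
    proof -
      have "A \<subseteq> cball a0 D" using diam a0 by (auto simp: mem_cball)
      then have "convex hull A \<subseteq> cball a0 D" by (intro hull_minimal) auto
      then have "dist a0 b \<le> D" using b by (auto simp: mem_cball)
      then show ?thesis using a0 by (intro infdist_le2) (auto simp: dist_commute)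
    qed
    have D0: "D \<ge> 0" using diam a0 by force
    have HD: "ehausdist A (convex hull A) \<le> ereal D" using haus_le[OF triv D0] by blast
    have "(2::ereal) \<le> ereal D" using H2 HD by (rule order_trans)
    then have D2: "D \<ge> 2" by simp
    obtain x y where xy: "x \<in> A" "y \<in> A" "dist x y > 1"
    proof (rule ccontr)
      assume "\<not> thesis"
      then have "\<forall>x\<in>A. \<forall>y\<in>A. dist x y \<le> 1" using that by force
      then have "ediam A \<le> 1" unfolding ediam_def by (intro SUP_least) simp
      then show False using ED D2 by simp
    qed
    have xy0: "x - y \<noteq> 0" using xy(3) by auto
    have T1: "T \<ge> 1" using p1 by (intro T_ge1[OF tc _ xy0]) simp
    define q where "q = (p - 1) / p"
    have q0: "0 < q" and q1: "q \<le> 1/2" using p1 p2 by (auto simp: q_def field_simps)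
    have qp: "1/p - 1 = -q" using p1 by (simp add: q_def field_simps)
    define r where "r = 2 powr (-q)"
    have r0: "0 < r" and r1: "r < 1" using q0 by (auto simp: r_def powr_less_one)
    define L where "L = log 2 (T * D)"
    have "1 * 2 \<le> T * D" using T1 D2 by (intro mult_mono) auto
    then have TD: "T * D \<ge> 2" by simp
    have L0: "L \<ge> 1" unfolding L_def using TD by simp
    define k where "k = nat \<lceil>L / q\<rceil>"
    have k1: "L / q \<le> real k" unfolding k_def by linarith
    have k2: "real k < L / q + 1" unfolding k_def using L0 q0 by (simp add: of_nat_nat) linarith
    have qk1: "L \<le> q * k" using k1 q0 by (simp add: field_simps)
    have qk2: "q * k \<le> L + q" using k2 q0 by (simp add: field_simps)
    have rk: "r^k = 2 powr (- (q * k))" unfolding r_def by (simp add: powr_power algebra_simps)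
    have "r^k \<le> 2 powr (- L)" unfolding rk using qk1 by simp
    also have "2 powr (- L) = 1 / (T * D)" unfolding L_def using TD by (simp add: powr_minus divide_inverse)
    finally have TDr: "T * D * r^k \<le> 1" using TD by (simp add: field_simps)
    define R where "R = real k + 1 / (2 * (1 - r))"
    have bnd: "infdist b A \<le> R" if b: "b \<in> convex hull A" for b
    proof -
      have "infdist b A \<le> real k + (T*D/2) * (r^k / (1 - r))"
        using hull_bound[OF tc p1 _ ac ne diam b, of k] T1 qp by (simp add: r_def)
      also have "(T*D/2) * (r^k / (1 - r)) = (T * D * r^k) / (2 * (1 - r))" by simp
      also have "\<dots> \<le> 1 / (2 * (1 - r))" using TDr r1 by (intro divide_right_mono) auto
      finally show ?thesis unfolding R_def by simp
    qed
    have R0: "R \<ge> 0" using r1 unfolding R_def by simp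
    have HR: "ehausdist A (convex hull A) \<le> ereal R" by (rule haus_le[OF bnd R0])
    have rb: "q / (1 - r) \<le> 2" unfolding r_def by (rule r_bound[OF q0 q1])
    show ?thesis
    proof (intro conjI allI impI)
      assume "ehausdist A (convex hull A) = \<infinity>"
      then show "ediam A = \<infinity>" using HR by simp
    next
      fix d :: real assume Hd: "ehausdist A (convex hull A) = ereal d"
      then have dR: "d \<le> R" using HR by simp
      have dq: "d * q \<le> L + q + 1"
      proof -
        have "d * q \<le> R * q" using dR q0 by (simp add: mult_right_mono)
        also have "R * q = q * k + (q / (1 - r)) / 2" unfolding R_def using r1 by (simp add: field_simps)
        also have "\<dots> \<le> L + q + 1"
        proof -
          have "q / (1 - r) / 2 \<le> 2 / 2" using rb by (rule divide_right_mono) simp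
          then show ?thesis using qk2 by linarith
        qed
        finally show ?thesis .
      qed
      have e8': "(8::real) = 2 powr 3" by (simp add: powr_numeral)
      have e8: "8 powr (1/p) = 2 powr (3 * (1/p))"
        by (subst e8') (rule powr_powr)
      have "8 powr (1/p) * (2 powr d) powr q = 2 powr (3 * (1/p) + d * q)"
        unfolding e8 by (simp add: powr_powr powr_add)
      also have "\<dots> \<le> 2 powr (3 * (1/p) + (L + q + 1))" using dq by simp
      also have "3 * (1/p) + (L + q + 1) = (4 - 2 * q) + L" using qp by (simp add: algebra_simps)
      also have "2 powr ((4 - 2 * q) + L) = 2 powr (4 - 2 * q) * (T * D)"
        unfolding L_def using TD by (simp add: powr_add)
      also have "\<dots> \<le> 2 powr 4 * (T * D)"
      proof -
        have "2 powr (4 - 2 * q) \<le> (2::real) powr 4" using q0 by (subst powr_le_cancel_iff) auto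
        then show ?thesis using TD by (intro mult_right_mono) auto
      qed
      finally have main: "8 powr (1/p) * (2 powr d) powr q \<le> 16 * T * D" by simp
      have eqv: "8 powr (1 / p) / (16 * T) * (2 powr d) powr ((p - 1) / p)
          = (8 powr (1/p) * (2 powr d) powr q) / (16 * T)" unfolding q_def by simp
      have pos16: "0 < 16 * T" using T1 by simp
      have main': "8 powr (1/p) * (2 powr d) powr q \<le> D * (16 * T)" using main by (simp add: algebra_simps)
      have "8 powr (1 / p) / (16 * T) * (2 powr d) powr ((p - 1) / p) \<le> D"
        unfolding eqv pos_divide_le_eq[OF pos16] by (rule main')
      then show "ediam A \<ge> ereal (8 powr (1 / p) / (16 * T) * (2 powr d) powr ((p - 1) / p))"
        using ED by simp
    qed
  qed
qed

end
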